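(* Let $f\in\mathbb C[x_1,\dots,x_n]$ be a nonzero quasi-homogeneous polynomial of degree $d$ with weight vector $\mathbf v\in\mathbb R^n\setminus\{0\}$, i.e. $\langle\mathbf v,\gamma\rangle=d$ for all $\gamma\in\mathrm{Supp}(f)$. Then for every $\ell\in\mathbb Z$ and every $\omega=\lambda\mathbf v$ with $\lambda\in\mathbb R\setminus\{0\}$, $$b_{\mathrm{Ann}(f^\ell),\omega}(s)=s-\ell\lambda d.$$
   Context: $D_n$ is the $n$-th Weyl algebra ($\partial_ix_j=x_j\partial_i+\delta_{ij}$); ideals are left ideals. For $\omega\in\mathbb R^n$, the $(-\omega,\omega)$-weight of $x^\alpha\partial^\beta$ is $-\langle\omega,\alpha\rangle+\langle\omega,\beta\rangle$; $\mathrm{in}_{(-\omega,\omega)}(P)$ is the sum of the terms of maximal weight of the normally ordered expression of $P$, and $\mathrm{in}_{(-\omega,\omega)}(I)$ is the left ideal generated by the $\mathrm{in}_{(-\omega,\omega)}(P)$, $P\in I\setminus\{0\}$. For a holonomic ideal $I$ and $\omega\neq0$, with $s=\sum_i\omega_ix_i\partial_i$, the b-function $b_{I,\omega}(s)$ is the monic generator of $\mathrm{in}_{(-\omega,\omega)}(I)\cap\mathbb C[s]$ (standing assumption: $\mathrm{in}_{(-\omega,\omega)}(I)\neq D_n$). $\mathrm{Ann}(f^\ell)=\{P\in D_n:P\bullet f^\ell=0\}$ with $x_i\bullet g=x_ig$, $\partial_i\bullet g=\partial g/\partial x_i$. $\mathrm{Supp}(f)=\{\gamma:c_\gamma\ne0\}$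 for $f=\sum c_\gamma x^\gamma$. *)

theory Defs
  imports Complex_Main "HOL-Library.Poly_Mapping" "HOL-Computational_Algebra.Polynomial"
begin

text \<open>Multi-indices: finitely supported maps nat to nat (variable i is indexed by i < n).\<close>
type_synonym mindex = "nat \<Rightarrow>\<^sub>0 nat"

type_synonym mpoly = "mindex \<Rightarrow>\<^sub>0 complex"

text \<open>Elements of the Weyl algebra in normally ordered form:
  P = sum of c_(alpha,beta) x^alpha d^beta, encoded as (alpha,beta) to c.\<close>
type_synonym weyl = "(mindex \<times> mindex) \<Rightarrow>\<^sub>0 complex"

definition mindex_in :: "nat \<Rightarrow> mindex \<Rightarrow> bool" where
  "mindex_in n a \<longleftrightarrow> Poly_Mapping.keys a \<subseteq> {..<n}"

definition mpoly_in :: "nat \<Rightarrow> mpoly \<Rightarrow> bool" where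
  "mpoly_in n f \<longleftrightarrow> (\<forall>g\<in>Poly_Mapping.keys f. mindex_in n g)"

definition weyl_alg :: "nat \<Rightarrow> weyl set" where
  "weyl_alg n = {P. \<forall>(a,b)\<in>Poly_Mapping.keys P. mindex_in n a \<and> mindex_in n b}"

definition mindex_le :: "mindex \<Rightarrow> mindex \<Rightarrow> bool" where
  "mindex_le k b \<longleftrightarrow> (\<forall>i. Poly_Mapping.lookup k i \<le> Poly_Mapping.lookup b i)"

text \<open>Normal ordering of (x^a d^b)(x^c d^e):
  d^b x^c = sum over k of prod_i C(b_i,k_i) C(c_i,k_i) k_i! x^(c-k) d^(b-k).\<close>
definition weyl_mono_mult :: "mindex \<Rightarrow> mindex \<Rightarrow> mindex \<Rightarrow> mindex \<Rightarrow> weyl" where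
  "weyl_mono_mult a b c e =
     (\<Sum>k\<in>{k. mindex_le k b \<and> mindex_le k c}.
        Poly_Mapping.single (a + (c - k), (b - k) + e)
          (\<Prod>i\<in>Poly_Mapping.keys b. of_nat ((Poly_Mapping.lookup b i choose Poly_Mapping.lookup k i) * (Poly_Mapping.lookup c i choose Poly_Mapping.lookup k i)
                                   * fact (Poly_Mapping.lookup k i))))"

definition weyl_mult :: "weyl \<Rightarrow> weyl \<Rightarrow> weyl" where
  "weyl_mult P Q = (\<Sum>(a,b)\<in>Poly_Mapping.keys P. \<Sum>(c,e)\<in>Poly_Mapping.keys Q.
       Poly_Mapping.map (\<lambda>z. Poly_Mapping.lookup P (a,b) * Poly_Mapping.lookup Q (c,e) * z) (weyl_mono_mult a b c e))"

definition weyl_one :: weyl where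
  "weyl_one = Poly_Mapping.single (0,0) 1"

definition weyl_const :: "complex \<Rightarrow> weyl" where
  "weyl_const c = Poly_Mapping.single (0,0) c"

primrec weyl_pow :: "weyl \<Rightarrow> nat \<Rightarrow> weyl" where
  "weyl_pow P 0 = weyl_one"
| "weyl_pow P (Suc m) = weyl_mult P (weyl_pow P m)"

definition is_left_ideal :: "nat \<Rightarrow> weyl set \<Rightarrow> bool" where
  "is_left_ideal n I \<longleftrightarrow> I \<subseteq> weyl_alg n \<and> 0 \<in> I \<and> (\<forall>P\<in>I. \<forall>Q\<in>I. P + Q \<in> I)
     \<and> (\<forall>Q\<in>weyl_alg n. \<forall>P\<in>I. weyl_mult Q P \<in> I)"

definition left_ideal_gen :: "nat \<Rightarrow> weyl set \<Rightarrow> weyl set" where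
  "left_ideal_gen n S = \<Inter>{I. is_left_ideal n I \<and> S \<subseteq> I}"

definition weight :: "nat \<Rightarrow> (nat \<Rightarrow> real) \<Rightarrow> mindex \<times> mindex \<Rightarrow> real" where
  "weight n \<omega> ab = (\<Sum>i<n. - \<omega> i * real (Poly_Mapping.lookup (fst ab) i) + \<omega> i * real (Poly_Mapping.lookup (snd ab) i))"

definition initial_form :: "nat \<Rightarrow> (nat \<Rightarrow> real) \<Rightarrow> weyl \<Rightarrow> weyl" where
  "initial_form n \<omega> P =
     (let m = Max (weight n \<omega> ` Poly_Mapping.keys P)
      in \<Sum>ab\<in>{ab\<in>Poly_Mapping.keys P. weight n \<omega> ab = m}. Poly_Mapping.single ab (Poly_Mapping.lookup P ab))"

definition initial_ideal :: "nat \<Rightarrow> (nat \<Rightarrow> real) \<Rightarrow> weyl set \<Rightarrow> weyl set" where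
  "initial_ideal n \<omega> I = left_ideal_gen n {initial_form n \<omega> P | P. P \<in> I \<and> P \<noteq> 0}"

definition euler_s :: "nat \<Rightarrow> (nat \<Rightarrow> real) \<Rightarrow> weyl" where
  "euler_s n \<omega> = (\<Sum>i<n. Poly_Mapping.single (Poly_Mapping.single i 1, Poly_Mapping.single i 1)
                                              (complex_of_real (\<omega> i)))"

definition weyl_poly_eval :: "complex poly \<Rightarrow> weyl \<Rightarrow> weyl" where
  "weyl_poly_eval p S = (\<Sum>j\<le>degree p. weyl_mult (weyl_const (coeff p j)) (weyl_pow S j))"

definition b_function :: "nat \<Rightarrow> weyl set \<Rightarrow> (nat \<Rightarrow> real) \<Rightarrow> complex poly" where
  "b_function n I \<omega> = (THE b. lead_coeff b = 1 \<and>
      {p. weyl_poly_eval p (euler_s n \<omega>) \<in> initial_ideal n \<omega> I} = {p. b dvd p})"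

definition mpoly_deriv :: "nat \<Rightarrow> mpoly \<Rightarrow> mpoly" where
  "mpoly_deriv i g = (\<Sum>a\<in>Poly_Mapping.keys g. Poly_Mapping.single (a - Poly_Mapping.single i 1)
                                     (Poly_Mapping.lookup g a * of_nat (Poly_Mapping.lookup a i)))"

definition monom :: "mindex \<Rightarrow> mpoly" where
  "monom a = Poly_Mapping.single a 1"

text \<open>A pair (g, m) represents the rational function g * f^m; one derivation step d/dx_i:
  d_i (g f^m) = (f d_i g + m g d_i f) f^(m-1).\<close>
definition rat_deriv_step :: "mpoly \<Rightarrow> nat \<Rightarrow> mpoly \<times> int \<Rightarrow> mpoly \<times> int" where
  "rat_deriv_step f i gm = (f * mpoly_deriv i (fst gm) + of_int (snd gm) * fst gm * mpoly_deriv i f,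
                            snd gm - 1)"

definition rat_derivs :: "nat \<Rightarrow> mpoly \<Rightarrow> mindex \<Rightarrow> mpoly \<times> int \<Rightarrow> mpoly \<times> int" where
  "rat_derivs n f b gm = foldr (\<lambda>i. rat_deriv_step f i ^^ Poly_Mapping.lookup b i) [0..<n] gm"

definition mindex_size :: "mindex \<Rightarrow> nat" where
  "mindex_size b = (\<Sum>i\<in>Poly_Mapping.keys b. Poly_Mapping.lookup b i)"

text \<open>Annihilator of f^l (l an integer, f nonzero): P \<bullet> f^l = sum c_ab x^a g_b f^(l-|b|)
  where d^b (f^l) = g_b f^(l-|b|); this rational function vanishes iff, after multiplying by
  f^(N-l) for N \<ge> all |b|, the polynomial sum c_ab x^a g_b f^(N-|b|) vanishes.\<close>
definition ann_pow :: "nat \<Rightarrow> mpoly \<Rightarrow> int \<Rightarrow> weyl set" where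
  "ann_pow n f l = {P \<in> weyl_alg n. \<exists>N. (\<forall>(a,b)\<in>Poly_Mapping.keys P. mindex_size b \<le> N) \<and>
      (\<Sum>(a,b)\<in>Poly_Mapping.keys P. Poly_Mapping.single 0 (Poly_Mapping.lookup P (a,b)) * monom a
            * fst (rat_derivs n f b (1, l)) * f ^ (N - mindex_size b)) = 0}"

end

theory Submission
  imports Defs
begin


lemma pm_repr:
  fixes p :: "'a \<Rightarrow>\<^sub>0 'b::comm_monoid_add"
  assumes "finite K" "Poly_Mapping.keys p \<subseteq> K"
  shows "(\<Sum>k\<in>K. Poly_Mapping.single k (Poly_Mapping.lookup p k)) = p"
proof (rule poly_mapping_eqI)
  fix x
  have "(\<Sum>k\<in>K. Poly_Mapping.lookup (Poly_Mapping.single k (Poly_Mapping.lookup p k)) x)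
      = (\<Sum>k\<in>K. if k = x then Poly_Mapping.lookup p x else 0)"
    by (rule sum.cong) (auto simp: lookup_single when_def)
  also have "\<dots> = Poly_Mapping.lookup p x"
    using assms by (auto simp: in_keys_iff)
  finally show "Poly_Mapping.lookup (\<Sum>k\<in>K. Poly_Mapping.single k (Poly_Mapping.lookup p k)) x = Poly_Mapping.lookup p x"
    by (simp add: lookup_sum)
qed

lemma single_sum: "Poly_Mapping.single k (sum g A) = (\<Sum>x\<in>A. Poly_Mapping.single k (g x))"
  by (induction A rule: infinite_finite_induct) (auto simp: single_add)

lemma lookup_map_mult: "Poly_Mapping.lookup (Poly_Mapping.map (\<lambda>z. (c::'b::semiring_0) * z) p) k = c * Poly_Mapping.lookup p k"
  by (simp add: Poly_Mapping.map.rep_eq when_def)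

lemma weyl_mult_lookup:
  assumes "finite A" "Poly_Mapping.keys P \<subseteq> A" "finite B" "Poly_Mapping.keys Q \<subseteq> B"
  shows "Poly_Mapping.lookup (weyl_mult P Q) x =
    (\<Sum>ab\<in>A. \<Sum>ce\<in>B. Poly_Mapping.lookup P ab * Poly_Mapping.lookup Q ce *
        Poly_Mapping.lookup (weyl_mono_mult (fst ab) (snd ab) (fst ce) (snd ce)) x)"
proof -
  have "Poly_Mapping.lookup (weyl_mult P Q) x =
    (\<Sum>ab\<in>Poly_Mapping.keys P. \<Sum>ce\<in>Poly_Mapping.keys Q. Poly_Mapping.lookup P ab * Poly_Mapping.lookup Q ce *
        Poly_Mapping.lookup (weyl_mono_mult (fst ab) (snd ab) (fst ce) (snd ce)) x)"
    unfolding weyl_mult_def by (simp add: lookup_sum split_def lookup_map_mult)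
  also have "\<dots> = (\<Sum>ab\<in>A. \<Sum>ce\<in>Poly_Mapping.keys Q. Poly_Mapping.lookup P ab * Poly_Mapping.lookup Q ce *
        Poly_Mapping.lookup (weyl_mono_mult (fst ab) (snd ab) (fst ce) (snd ce)) x)"
    using assms by (intro sum.mono_neutral_left) (auto simp: in_keys_iff)
  also have "\<dots> = (\<Sum>ab\<in>A. \<Sum>ce\<in>B. Poly_Mapping.lookup P ab * Poly_Mapping.lookup Q ce *
        Poly_Mapping.lookup (weyl_mono_mult (fst ab) (snd ab) (fst ce) (snd ce)) x)"
    using assms by (intro sum.cong refl sum.mono_neutral_left) (auto simp: in_keys_iff)
  finally show ?thesis .
qed

lemma mindex_le_zero: "mindex_le k 0 \<longleftrightarrow> k = 0"
  by (auto simp: mindex_le_def intro!: poly_mapping_eqI)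

lemma pm_zeroI: "(\<forall>i. Poly_Mapping.lookup x i = 0) \<Longrightarrow> x = 0"
  by (auto intro!: poly_mapping_eqI)

lemma mult_if01: "(a::'a::semiring_1) * (if P then 1 else 0) = (if P then a else 0)"
  by simp

lemma mono_left0: "weyl_mono_mult 0 0 c e = Poly_Mapping.single (c, e) 1"
proof -
  have "{k. mindex_le k 0 \<and> mindex_le k c} = {0}"
    by (auto simp: mindex_le_def intro: pm_zeroI)
  then show ?thesis unfolding weyl_mono_mult_def by simp
qed

lemma mono_right0: "weyl_mono_mult a b 0 0 = Poly_Mapping.single (a, b) 1"
proof -
  have "{k. mindex_le k b \<and> mindex_le k 0} = {0}"
    by (auto simp: mindex_le_def intro: pm_zeroI)
  then show ?thesis unfolding weyl_mono_mult_def by simp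
qed

lemma keys_const: "Poly_Mapping.keys (weyl_const c) \<subseteq> {(0,0)}"
  by (simp add: weyl_const_def)

lemma lookup_const: "Poly_Mapping.lookup (weyl_const c) x = (if x = (0,0) then c else 0)"
  by (simp add: weyl_const_def lookup_single when_def eq_commute)

lemma mult_const_left: "Poly_Mapping.lookup (weyl_mult (weyl_const c) X) x = c * Poly_Mapping.lookup X x"
proof -
  have "Poly_Mapping.lookup (weyl_mult (weyl_const c) X) x =
     (\<Sum>ab\<in>{(0,0)}. \<Sum>ce\<in>Poly_Mapping.keys X. Poly_Mapping.lookup (weyl_const c) ab * Poly_Mapping.lookup X ce *
        Poly_Mapping.lookup (weyl_mono_mult (fst ab) (snd ab) (fst ce) (snd ce)) x)"
    by (rule weyl_mult_lookup) (auto simp: keys_const)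
  also have "\<dots> = (\<Sum>ce\<in>Poly_Mapping.keys X. if ce = x then c * Poly_Mapping.lookup X x else 0)"
    by (auto simp: lookup_const mono_left0 lookup_single when_def mult_if01 intro!: sum.cong)
  also have "\<dots> = c * Poly_Mapping.lookup X x"
    by (cases "x \<in> Poly_Mapping.keys X") (simp_all add: in_keys_iff)
  finally show ?thesis .
qed

lemma mult_const_right: "Poly_Mapping.lookup (weyl_mult X (weyl_const c)) x = c * Poly_Mapping.lookup X x"
proof -
  have "Poly_Mapping.lookup (weyl_mult X (weyl_const c)) x =
     (\<Sum>ab\<in>Poly_Mapping.keys X. \<Sum>ce\<in>{(0,0)}. Poly_Mapping.lookup X ab * Poly_Mapping.lookup (weyl_const c) ce *
        Poly_Mapping.lookup (weyl_mono_mult (fst ab) (snd ab) (fst ce) (snd ce)) x)"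
    by (rule weyl_mult_lookup) (auto simp: keys_const)
  also have "\<dots> = (\<Sum>ab\<in>Poly_Mapping.keys X. if ab = x then c * Poly_Mapping.lookup X x else 0)"
    by (auto simp: lookup_const mono_right0 lookup_single when_def mult_if01 intro!: sum.cong)
  also have "\<dots> = c * Poly_Mapping.lookup X x"
    by (cases "x \<in> Poly_Mapping.keys X") (simp_all add: in_keys_iff)
  finally show ?thesis .
qed

lemma mult_add_right: "weyl_mult P (X + Y) = weyl_mult P X + weyl_mult P Y"
proof (rule poly_mapping_eqI)
  fix x
  define B where "B = Poly_Mapping.keys X \<union> Poly_Mapping.keys Y"
  have k: "Poly_Mapping.keys (X + Y) \<subseteq> B" "Poly_Mapping.keys X \<subseteq> B" "Poly_Mapping.keys Y \<subseteq> B" "finite B"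
    using keys_add[of X Y] by (auto simp: B_def)
  define m where "m = (\<lambda>ab ce. Poly_Mapping.lookup (weyl_mono_mult (fst ab) (snd ab) (fst ce) (snd ce)) x)"
  have e: "Poly_Mapping.lookup (weyl_mult P Z) x = (\<Sum>ab\<in>Poly_Mapping.keys P. \<Sum>ce\<in>B. Poly_Mapping.lookup P ab * Poly_Mapping.lookup Z ce * m ab ce)"
    if "Poly_Mapping.keys Z \<subseteq> B" for Z
    unfolding m_def by (rule weyl_mult_lookup) (use that k in auto)
  show "Poly_Mapping.lookup (weyl_mult P (X + Y)) x = Poly_Mapping.lookup (weyl_mult P X + weyl_mult P Y) x"
    unfolding lookup_add e[OF k(1)] e[OF k(2)] e[OF k(3)] sum.distrib[symmetric]
    by (intro sum.cong refl) (simp add: lookup_add distrib_left distrib_right)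
qed

lemma mult_zero_right: "weyl_mult P 0 = 0"
proof -
  have "weyl_mult P (0+0) = weyl_mult P 0 + weyl_mult P 0" by (rule mult_add_right)
  then show ?thesis by simp
qed

lemma mult_minus_right: "weyl_mult P (- X) = - weyl_mult P X"
proof -
  have "weyl_mult P (X + - X) = weyl_mult P X + weyl_mult P (- X)" by (rule mult_add_right)
  then have "weyl_mult P X + weyl_mult P (- X) = 0" by (simp only: add.right_inverse mult_zero_right)
  from minus_unique[OF this] show ?thesis by simp
qed

lemma mult_diff_right: "weyl_mult P (X - Y) = weyl_mult P X - weyl_mult P Y"
  by (simp only: diff_conv_add_uminus mult_add_right mult_minus_right)


lemma sum_nz_ex: "sum g A \<noteq> 0 \<Longrightarrow> \<exists>x\<in>A. g x \<noteq> 0"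
  by (meson sum.neutral)

lemma keys_minus_nat: "Poly_Mapping.keys ((c::mindex) - k) \<subseteq> Poly_Mapping.keys c"
  by (auto simp: in_keys_iff lookup_minus)

lemma mindex_in_add: "mindex_in n a \<Longrightarrow> mindex_in n c \<Longrightarrow> mindex_in n (a + c)"
  using keys_add[of a c] by (auto simp: mindex_in_def)

lemma mindex_in_minus: "mindex_in n c \<Longrightarrow> mindex_in n (c - k)"
  using keys_minus_nat[of c k] by (auto simp: mindex_in_def)

lemma lookup_sum_single_nz: "Poly_Mapping.lookup (\<Sum>k\<in>K. Poly_Mapping.single (h k) (g k)) x \<noteq> 0 \<Longrightarrow> \<exists>k. x = h k"
  unfolding lookup_sum by (drule sum_nz_ex) (auto simp: lookup_single when_def split: if_splits)

lemma keys_mono: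
  assumes "x \<in> Poly_Mapping.keys (weyl_mono_mult a b c e)"
  shows "\<exists>k. x = (a + (c - k), (b - k) + e)"
proof -
  have "Poly_Mapping.lookup (weyl_mono_mult a b c e) x \<noteq> 0" using assms by (simp add: in_keys_iff)
  then show ?thesis unfolding weyl_mono_mult_def by (rule lookup_sum_single_nz)
qed

lemma weyl_alg_mult:
  assumes P: "P \<in> weyl_alg n" and Q: "Q \<in> weyl_alg n"
  shows "weyl_mult P Q \<in> weyl_alg n"
  unfolding weyl_alg_def
proof (clarsimp)
  fix x y assume "(x, y) \<in> Poly_Mapping.keys (weyl_mult P Q)"
  then have "Poly_Mapping.lookup (weyl_mult P Q) (x, y) \<noteq> 0" by (simp add: in_keys_iff)
  then obtain ab ce where ab: "ab \<in> Poly_Mapping.keys P" and ce: "ce \<in> Poly_Mapping.keys Q"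
    and nz: "Poly_Mapping.lookup P ab * Poly_Mapping.lookup Q ce *
        Poly_Mapping.lookup (weyl_mono_mult (fst ab) (snd ab) (fst ce) (snd ce)) (x,y) \<noteq> 0"
    unfolding weyl_mult_lookup[OF finite_keys subset_refl finite_keys subset_refl] by (blast dest: sum_nz_ex)
  then have "(x,y) \<in> Poly_Mapping.keys (weyl_mono_mult (fst ab) (snd ab) (fst ce) (snd ce))"
    by (simp add: in_keys_iff)
  then obtain k where k: "(x,y) = (fst ab + (fst ce - k), (snd ab - k) + snd ce)"
    using keys_mono by blast
  have "mindex_in n (fst ab)" "mindex_in n (snd ab)" using P ab by (auto simp: weyl_alg_def)
  moreover have "mindex_in n (fst ce)" "mindex_in n (snd ce)" using Q ce by (auto simp: weyl_alg_def)
  ultimately show "mindex_in n x \<and> mindex_in n y"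
    using k by (auto intro!: mindex_in_add mindex_in_minus)
qed

lemma weyl_alg_add: "P \<in> weyl_alg n \<Longrightarrow> Q \<in> weyl_alg n \<Longrightarrow> P + Q \<in> weyl_alg n"
  using keys_add[of P Q] unfolding weyl_alg_def by blast

lemma weyl_alg_ideal: "is_left_ideal n (weyl_alg n)"
  unfolding is_left_ideal_def by (auto simp: weyl_alg_add weyl_alg_mult) (simp add: weyl_alg_def)

lemma const_in: "weyl_const c \<in> weyl_alg n"
  using keys_const[of c] by (auto simp: weyl_alg_def mindex_in_def)

lemma gen_ideal:
  assumes "S \<subseteq> weyl_alg n"
  shows "is_left_ideal n (left_ideal_gen n S)" "S \<subseteq> left_ideal_gen n S"
    "left_ideal_gen n S \<subseteq> weyl_alg n"
proof -
  have ne: "weyl_alg n \<in> {I. is_left_ideal n I \<and> S \<subseteq> I}" using assms weyl_alg_ideal by auto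
  show "left_ideal_gen n S \<subseteq> weyl_alg n" using ne unfolding left_ideal_gen_def by blast
  show "S \<subseteq> left_ideal_gen n S" unfolding left_ideal_gen_def by blast
  show "is_left_ideal n (left_ideal_gen n S)"
    using \<open>left_ideal_gen n S \<subseteq> weyl_alg n\<close> unfolding is_left_ideal_def left_ideal_gen_def
    by (auto simp: is_left_ideal_def)
qed

lemma ideal_smult: "is_left_ideal n J \<Longrightarrow> X \<in> J \<Longrightarrow> weyl_mult (weyl_const c) X \<in> J"
  using const_in by (auto simp: is_left_ideal_def)

lemma const_mult_eq: "weyl_mult (weyl_const c) X = Poly_Mapping.map (\<lambda>z. c * z) X"
  by (rule poly_mapping_eqI) (simp add: mult_const_left lookup_map_mult)

lemma ideal_neg: "is_left_ideal n J \<Longrightarrow> X \<in> J \<Longrightarrow> - X \<in> J"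
proof -
  assume "is_left_ideal n J" "X \<in> J"
  then have "weyl_mult (weyl_const (-1)) X \<in> J" by (rule ideal_smult)
  moreover have "weyl_mult (weyl_const (-1)) X = - X"
    by (rule poly_mapping_eqI) (simp add: mult_const_left)
  ultimately show ?thesis by simp
qed

lemma ideal_add: "is_left_ideal n J \<Longrightarrow> X \<in> J \<Longrightarrow> Y \<in> J \<Longrightarrow> X + Y \<in> J"
  by (auto simp: is_left_ideal_def)

lemma ideal_diff: "is_left_ideal n J \<Longrightarrow> X \<in> J \<Longrightarrow> Y \<in> J \<Longrightarrow> X - Y \<in> J"
  using ideal_add[of n J X "-Y"] ideal_neg[of n J Y] by simp

lemma ideal_sum: "is_left_ideal n J \<Longrightarrow> (\<And>x. x \<in> A \<Longrightarrow> g x \<in> J) \<Longrightarrow> sum g A \<in> J"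
  by (induction A rule: infinite_finite_induct) (auto simp: is_left_ideal_def)

lemma keys_initial_form: "Poly_Mapping.keys (initial_form n \<omega> P) \<subseteq> Poly_Mapping.keys P"
proof
  fix x assume "x \<in> Poly_Mapping.keys (initial_form n \<omega> P)"
  then have "Poly_Mapping.lookup (initial_form n \<omega> P) x \<noteq> 0" by (simp add: in_keys_iff)
  then obtain ab where "ab \<in> Poly_Mapping.keys P" "Poly_Mapping.lookup (Poly_Mapping.single ab (Poly_Mapping.lookup P ab)) x \<noteq> 0"
    unfolding initial_form_def Let_def lookup_sum by (blast dest: sum_nz_ex)
  then show "x \<in> Poly_Mapping.keys P" by (auto simp: lookup_single when_def split: if_splits)
qed

lemma initial_in: "P \<in> weyl_alg n \<Longrightarrow> initial_form n \<omega> P \<in> weyl_alg n"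
  using keys_initial_form[of n \<omega> P] by (auto simp: weyl_alg_def)

lemma initial_ideal_props:
  assumes "I \<subseteq> weyl_alg n"
  shows "is_left_ideal n (initial_ideal n \<omega> I)" "initial_ideal n \<omega> I \<subseteq> weyl_alg n"
    "\<And>P. P \<in> I \<Longrightarrow> P \<noteq> 0 \<Longrightarrow> initial_form n \<omega> P \<in> initial_ideal n \<omega> I"
proof -
  have S: "{initial_form n \<omega> P | P. P \<in> I \<and> P \<noteq> 0} \<subseteq> weyl_alg n"
    using assms initial_in by blast
  show "is_left_ideal n (initial_ideal n \<omega> I)" "initial_ideal n \<omega> I \<subseteq> weyl_alg n"
    unfolding initial_ideal_def using gen_ideal[OF S] by auto
  show "\<And>P. P \<in> I \<Longrightarrow> P \<noteq> 0 \<Longrightarrow> initial_form n \<omega> P \<in> initial_ideal n \<omega> I"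
    unfolding initial_ideal_def using gen_ideal(2)[OF S] by blast
qed




lemma ideal_zero: "is_left_ideal n J \<Longrightarrow> 0 \<in> J"
  by (simp add: is_left_ideal_def)

lemma pow_in:
  assumes J: "is_left_ideal n J" and S: "S \<in> weyl_alg n" and D: "S - weyl_const c \<in> J"
  shows "weyl_pow S j - weyl_const (c ^ j) \<in> J"
proof (induction j)
  case 0
  then show ?case using ideal_zero[OF J] by (simp add: weyl_one_def weyl_const_def)
next
  case (Suc j)
  define R where "R = weyl_pow S j - weyl_const (c ^ j)"
  have eq: "weyl_pow S (Suc j) - weyl_const (c ^ Suc j) = weyl_mult S R + weyl_mult (weyl_const (c ^ j)) (S - weyl_const c)"
  proof (rule poly_mapping_eqI)
    fix x
    have "weyl_pow S j = R + weyl_const (c ^ j)" by (simp add: R_def)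
    then have "weyl_pow S (Suc j) = weyl_mult S R + weyl_mult S (weyl_const (c ^ j))"
      by (simp add: mult_add_right)
    then show "Poly_Mapping.lookup (weyl_pow S (Suc j) - weyl_const (c ^ Suc j)) x =
      Poly_Mapping.lookup (weyl_mult S R + weyl_mult (weyl_const (c ^ j)) (S - weyl_const c)) x"
      by (simp add: lookup_add lookup_minus mult_const_right mult_const_left lookup_const algebra_simps)
  qed
  have "weyl_mult S R \<in> J" using J S Suc.IH by (auto simp: is_left_ideal_def R_def)
  moreover have "weyl_mult (weyl_const (c ^ j)) (S - weyl_const c) \<in> J" by (rule ideal_smult[OF J D])
  ultimately show ?case unfolding eq by (rule ideal_add[OF J])
qed

lemma eval_decomp:
  "weyl_poly_eval p S - weyl_const (poly p c) =
    (\<Sum>j\<le>degree p. weyl_mult (weyl_const (coeff p j)) (weyl_pow S j - weyl_const (c ^ j)))"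
proof (rule poly_mapping_eqI)
  fix x
  show "Poly_Mapping.lookup (weyl_poly_eval p S - weyl_const (poly p c)) x =
    Poly_Mapping.lookup (\<Sum>j\<le>degree p. weyl_mult (weyl_const (coeff p j)) (weyl_pow S j - weyl_const (c ^ j))) x"
    unfolding weyl_poly_eval_def lookup_minus lookup_sum mult_const_left lookup_const poly_altdef
    by (simp add: algebra_simps sum_subtractf sum_distrib_right)
qed

lemma eval_set:
  assumes J: "is_left_ideal n J" and Jsub: "J \<subseteq> weyl_alg n" and Jne: "J \<noteq> weyl_alg n"
    and S: "S \<in> weyl_alg n" and D: "S - weyl_const c \<in> J"
  shows "{p. weyl_poly_eval p S \<in> J} = {p. [:-c, 1:] dvd p}"
proof -
  have dec: "weyl_poly_eval p S - weyl_const (poly p c) \<in> J" for p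
    unfolding eval_decomp by (intro ideal_sum[OF J] ideal_smult[OF J] pow_in[OF J S D])
  have "weyl_poly_eval p S \<in> J \<longleftrightarrow> poly p c = 0" for p
  proof
    assume "poly p c = 0"
    then show "weyl_poly_eval p S \<in> J" using dec[of p] by (simp add: weyl_const_def)
  next
    assume ev: "weyl_poly_eval p S \<in> J"
    show "poly p c = 0"
    proof (rule ccontr)
      assume r: "poly p c \<noteq> 0"
      have "weyl_poly_eval p S - (weyl_poly_eval p S - weyl_const (poly p c)) \<in> J"
        by (rule ideal_diff[OF J ev dec])
      then have "weyl_const (poly p c) \<in> J" by simp
      then have "weyl_mult (weyl_const (1 / poly p c)) (weyl_const (poly p c)) \<in> J" by (rule ideal_smult[OF J])
      moreover have "weyl_mult (weyl_const (1 / poly p c)) (weyl_const (poly p c)) = weyl_const 1"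
        by (rule poly_mapping_eqI) (simp add: mult_const_left lookup_const r)
      ultimately have one: "weyl_const 1 \<in> J" by simp
      have "weyl_alg n \<subseteq> J"
      proof
        fix Q assume Q: "Q \<in> weyl_alg n"
        then have "weyl_mult Q (weyl_const 1) \<in> J" using J one by (auto simp: is_left_ideal_def)
        moreover have "weyl_mult Q (weyl_const 1) = Q"
          by (rule poly_mapping_eqI) (simp add: mult_const_right)
        ultimately show "Q \<in> J" by simp
      qed
      then show False using Jsub Jne by blast
    qed
  qed
  then have "\<And>p. (weyl_poly_eval p S \<in> J) = ([:-c, 1:] dvd p)" by (simp only: poly_eq_0_iff_dvd)
  then show ?thesis by blast
qed

lemma monic_unique:
  fixes c :: complex
  assumes "lead_coeff b = 1" "{p. [:-c, 1:] dvd p} = {p. b dvd p}"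
  shows "b = [:-c, 1:]"
proof -
  have b0: "b \<noteq> 0" using assms(1) by auto
  have "[:-c, 1:] \<in> {p. b dvd p}" unfolding assms(2)[symmetric] by simp
  then have d1: "b dvd [:-c, 1:]" by simp
  have "b \<in> {p. [:-c, 1:] dvd p}" unfolding assms(2) by simp
  then have d2: "[:-c, 1:] dvd b" by simp
  have "degree b \<le> 1" using dvd_imp_degree_le[OF d1] by simp
  moreover have "degree b \<ge> 1" using dvd_imp_degree_le[OF d2 b0] by simp
  ultimately have "degree b = 1" by simp
  obtain q where bq: "b = [:-c, 1:] * q" using d2 by (auto elim: dvdE)
  have q0: "q \<noteq> 0" using b0 bq by auto
  have "degree b = 1 + degree q" unfolding bq using q0 by (subst degree_mult_eq) auto
  then have dq: "degree q = 0" using \<open>degree b = 1\<close> by simp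
  have "lead_coeff b = lead_coeff q" unfolding bq lead_coeff_mult by simp
  then have "coeff q 0 = 1" using assms(1) dq by simp
  then have "q = 1" using dq by (metis degree_0_id one_pCons)
  then show ?thesis using bq by simp
qed



abbreviation ee :: "nat \<Rightarrow> mindex" where "ee i \<equiv> Poly_Mapping.single i 1"

lemma ee_eq: "ee j = ee i \<longleftrightarrow> j = i"
  by (metis lookup_single_eq lookup_single_not_eq zero_neq_one)

lemma ee_eq': "Poly_Mapping.single (j::nat) (Suc 0) = Poly_Mapping.single i (Suc 0) \<longleftrightarrow> j = i"
  using ee_eq[of j i] by simp

lemma ee_nz: "ee i \<noteq> 0"
  by (metis lookup_single_eq lookup_zero zero_neq_one)

lemma deriv_x:
  "monom (ee i) * mpoly_deriv i f = (\<Sum>a\<in>Poly_Mapping.keys f. Poly_Mapping.single a (Poly_Mapping.lookup f a * of_nat (Poly_Mapping.lookup a i)))"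
  unfolding mpoly_deriv_def sum_distrib_left
proof (rule sum.cong[OF refl])
  fix a
  show "monom (ee i) * Poly_Mapping.single (a - ee i) (Poly_Mapping.lookup f a * of_nat (Poly_Mapping.lookup a i)) =
    Poly_Mapping.single a (Poly_Mapping.lookup f a * of_nat (Poly_Mapping.lookup a i))"
  proof (cases "Poly_Mapping.lookup a i = 0")
    case True
    then show ?thesis by simp
  next
    case False
    have "ee i + (a - ee i) = a"
      by (rule poly_mapping_eqI) (use False in \<open>auto simp: lookup_add lookup_minus lookup_single when_def\<close>)
    then show ?thesis unfolding monom_def mult_single by simp
  qed
qed

lemma euler:
  assumes qh: "\<forall>\<gamma>\<in>Poly_Mapping.keys f. (\<Sum>i<n. v i * real (Poly_Mapping.lookup \<gamma> i)) = d"
  shows "(\<Sum>i<n. Poly_Mapping.single 0 (complex_of_real (v i)) * (monom (ee i) * mpoly_deriv i f))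
     = Poly_Mapping.single 0 (complex_of_real d) * f"
proof -
  have "(\<Sum>i<n. Poly_Mapping.single 0 (complex_of_real (v i)) * (monom (ee i) * mpoly_deriv i f))
    = (\<Sum>i<n. \<Sum>a\<in>Poly_Mapping.keys f. Poly_Mapping.single a (complex_of_real (v i) * (Poly_Mapping.lookup f a * of_nat (Poly_Mapping.lookup a i))))"
    unfolding deriv_x sum_distrib_left mult_single by simp
  also have "\<dots> = (\<Sum>a\<in>Poly_Mapping.keys f. \<Sum>i<n. Poly_Mapping.single a (complex_of_real (v i) * (Poly_Mapping.lookup f a * of_nat (Poly_Mapping.lookup a i))))"
    by (rule sum.swap)
  also have "\<dots> = (\<Sum>a\<in>Poly_Mapping.keys f. Poly_Mapping.single a (Poly_Mapping.lookup f a * complex_of_real (\<Sum>i<n. v i * real (Poly_Mapping.lookup a i))))"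
    unfolding single_sum[symmetric]
    by (intro sum.cong refl arg_cong[where f = "Poly_Mapping.single _"]) (simp add: sum_distrib_left algebra_simps)
  also have "\<dots> = (\<Sum>a\<in>Poly_Mapping.keys f. Poly_Mapping.single 0 (complex_of_real d) * Poly_Mapping.single a (Poly_Mapping.lookup f a))"
    using qh by (intro sum.cong refl) (simp add: mult_single mult.commute)
  also have "\<dots> = Poly_Mapping.single 0 (complex_of_real d) * f"
    unfolding sum_distrib_left[symmetric] using pm_repr[of "Poly_Mapping.keys f" f] by simp
  finally show ?thesis .
qed

lemma foldr_funpow_single:
  "distinct xs \<Longrightarrow> foldr (\<lambda>j. g j ^^ Poly_Mapping.lookup (ee i) j) xs x = (if i \<in> set xs then g i x else x)"
proof (induction xs)
  case Nil
  then show ?case by simp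
next
  case (Cons j xs)
  then show ?case by (auto simp: lookup_single when_def)
qed

lemma foldr_funpow_zero:
  "foldr (\<lambda>j. g j ^^ Poly_Mapping.lookup 0 j) xs x = x"
  by (induction xs) auto

lemma rat_derivs_ee: "i < n \<Longrightarrow> rat_derivs n f (ee i) gm = rat_deriv_step f i gm"
  unfolding rat_derivs_def by (subst foldr_funpow_single) auto

lemma rat_derivs_0: "rat_derivs n f 0 gm = gm"
  unfolding rat_derivs_def by (rule foldr_funpow_zero)

lemma mpoly_deriv_1: "mpoly_deriv i 1 = 0"
  unfolding mpoly_deriv_def by simp

lemma step_1: "fst (rat_deriv_step f i (1, l)) = of_int l * mpoly_deriv i f"
  unfolding rat_deriv_step_def by (simp add: mpoly_deriv_1)

lemma mindex_size_ee: "mindex_size (ee i) = 1"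
  unfolding mindex_size_def by simp

lemma mindex_size_ee': "mindex_size (Poly_Mapping.single i (Suc 0)) = 1"
  unfolding mindex_size_def by simp

lemma mindex_size_0: "mindex_size 0 = 0"
  unfolding mindex_size_def by simp


lemma lookup_euler_ee: "i < n \<Longrightarrow> Poly_Mapping.lookup (euler_s n \<omega>) (ee i, ee i) = complex_of_real (\<omega> i)"
proof -
  assume i: "i < n"
  have "Poly_Mapping.lookup (euler_s n \<omega>) (ee i, ee i) = (\<Sum>j<n. if j = i then complex_of_real (\<omega> i) else 0)"
    unfolding euler_s_def lookup_sum by (intro sum.cong refl) (auto simp: lookup_single when_def ee_eq ee_eq')
  also have "\<dots> = complex_of_real (\<omega> i)" using i by simp
  finally show ?thesis .
qed

lemma keys_euler: "x \<in> Poly_Mapping.keys (euler_s n \<omega>) \<Longrightarrow> \<exists>i<n. x = (ee i, ee i)"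
proof -
  assume "x \<in> Poly_Mapping.keys (euler_s n \<omega>)"
  then have "Poly_Mapping.lookup (euler_s n \<omega>) x \<noteq> 0" by (simp add: in_keys_iff)
  then obtain j where "j \<in> {..<n}" "Poly_Mapping.lookup (Poly_Mapping.single (ee j, ee j) (complex_of_real (\<omega> j))) x \<noteq> 0"
    unfolding euler_s_def lookup_sum by (blast dest: sum_nz_ex)
  then show ?thesis by (auto simp: lookup_single when_def split: if_splits)
qed

lemma lookup_euler_00: "Poly_Mapping.lookup (euler_s n \<omega>) (0, 0) = 0"
  using keys_euler[of "(0,0)" n \<omega>] ee_nz by (auto simp: in_keys_iff)

lemma keys_P0: "x \<in> Poly_Mapping.keys (euler_s n \<omega> - weyl_const c) \<Longrightarrow> x = (0,0) \<or> (\<exists>i<n. x = (ee i, ee i))"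
proof -
  assume "x \<in> Poly_Mapping.keys (euler_s n \<omega> - weyl_const c)"
  then have "Poly_Mapping.lookup (euler_s n \<omega>) x \<noteq> 0 \<or> Poly_Mapping.lookup (weyl_const c) x \<noteq> 0"
    by (auto simp: in_keys_iff lookup_minus)
  then show ?thesis using keys_euler[of x n \<omega>] by (auto simp: lookup_const in_keys_iff split: if_splits)
qed

lemma P0_in: "euler_s n \<omega> - weyl_const c \<in> weyl_alg n"
  unfolding weyl_alg_def
proof (clarify)
  fix a b assume "(a, b) \<in> Poly_Mapping.keys (euler_s n \<omega> - weyl_const c)"
  then have "(a,b) = (0,0) \<or> (\<exists>i<n. (a,b) = (ee i, ee i))" by (rule keys_P0)
  then show "mindex_in n a \<and> mindex_in n b" by (auto simp: mindex_in_def)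
qed

lemma weight_diag: "weight n \<omega> (a, a) = 0"
  unfolding weight_def by simp

lemma initial_P0:
  assumes "euler_s n \<omega> - weyl_const c \<noteq> 0"
  shows "initial_form n \<omega> (euler_s n \<omega> - weyl_const c) = euler_s n \<omega> - weyl_const c"
proof -
  define P where "P = euler_s n \<omega> - weyl_const c"
  have w: "weight n \<omega> ab = 0" if "ab \<in> Poly_Mapping.keys P" for ab
    using keys_P0[of ab n \<omega> c] that weight_diag by (auto simp: P_def)
  have ne: "Poly_Mapping.keys P \<noteq> {}" using assms by (simp add: P_def)
  have "weight n \<omega> ` Poly_Mapping.keys P = (\<lambda>_. 0) ` Poly_Mapping.keys P"
    by (rule image_cong) (auto simp: w)
  then have "weight n \<omega> ` Poly_Mapping.keys P = {0}" using ne by (simp add: image_constant_conv)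
  then have "initial_form n \<omega> P = (\<Sum>ab\<in>Poly_Mapping.keys P. Poly_Mapping.single ab (Poly_Mapping.lookup P ab))"
    unfolding initial_form_def Let_def using w by (intro sum.cong) auto
  also have "\<dots> = P" by (rule pm_repr) auto
  finally show ?thesis by (simp add: P_def)
qed


lemma P0_ann:
  assumes qh: "\<forall>\<gamma>\<in>Poly_Mapping.keys f. (\<Sum>i<n. v i * real (Poly_Mapping.lookup \<gamma> i)) = d"
  shows "euler_s n (\<lambda>i. lam * v i) - weyl_const (complex_of_real (real_of_int l * lam * d)) \<in> ann_pow n f l"
proof -
  define c where "c = complex_of_real (real_of_int l * lam * d)"
  define P where "P = euler_s n (\<lambda>i. lam * v i) - weyl_const c"
  define T where "T = (\<lambda>(a,b). Poly_Mapping.single 0 (Poly_Mapping.lookup P (a,b)) * monom a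
            * fst (rat_derivs n f b (1, l)) * f ^ (1 - mindex_size b))"
  define K where "K = insert (0,0) ((\<lambda>i. (ee i, ee i)) ` {..<n})"
  have kP: "Poly_Mapping.keys P \<subseteq> K"
    using keys_P0 unfolding K_def P_def by blast
  have fK: "finite K" by (simp add: K_def)
  have size: "\<forall>(a,b)\<in>Poly_Mapping.keys P. mindex_size b \<le> 1"
    using kP by (force simp: K_def mindex_size_ee' mindex_size_0)
  have "sum T (Poly_Mapping.keys P) = sum T K"
    using kP fK by (intro sum.mono_neutral_left) (auto simp: T_def in_keys_iff)
  also have "\<dots> = T (0,0) + (\<Sum>i<n. T (ee i, ee i))"
  proof -
    have inj: "inj_on (\<lambda>i. (ee i, ee i)) {..<n}" by (auto simp: inj_on_def ee_eq')
    have "(0,0) \<notin> (\<lambda>i. (ee i, ee i)) ` {..<n}" using ee_nz by auto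
    then have "sum T K = T (0,0) + sum T ((\<lambda>i. (ee i, ee i)) ` {..<n})"
      unfolding K_def by (intro sum.insert) auto
    also have "sum T ((\<lambda>i. (ee i, ee i)) ` {..<n}) = (\<Sum>i<n. T (ee i, ee i))"
      unfolding sum.reindex[OF inj] comp_def by (rule refl)
    finally show ?thesis .
  qed
  also have "T (0,0) = Poly_Mapping.single 0 (- c) * f"
    by (simp add: T_def P_def lookup_minus lookup_euler_00 lookup_const monom_def rat_derivs_0 mindex_size_0)
  also have "(\<Sum>i<n. T (ee i, ee i)) = (\<Sum>i<n. Poly_Mapping.single 0 (complex_of_real (lam * v i)) * monom (ee i) * (of_int l * mpoly_deriv i f))"
  proof (intro sum.cong refl)
    fix i assume "i \<in> {..<n}"
    then have i: "i < n" by simp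
    have lk: "Poly_Mapping.lookup P (ee i, ee i) = complex_of_real (lam * v i)"
      unfolding P_def lookup_minus lookup_euler_ee[OF i] lookup_const using ee_nz by simp
    have "T (ee i, ee i) = Poly_Mapping.single 0 (Poly_Mapping.lookup P (ee i, ee i)) * monom (ee i)
            * fst (rat_derivs n f (ee i) (1, l)) * f ^ (1 - mindex_size (ee i))"
      by (simp only: T_def prod.case)
    also have "\<dots> = Poly_Mapping.single 0 (complex_of_real (lam * v i)) * monom (ee i) * (of_int l * mpoly_deriv i f)"
      unfolding lk rat_derivs_ee[OF i] step_1 mindex_size_ee by simp
    finally show "T (ee i, ee i) = Poly_Mapping.single 0 (complex_of_real (lam * v i)) * monom (ee i) * (of_int l * mpoly_deriv i f)" .
  qed
  also have "\<dots> = Poly_Mapping.single 0 (complex_of_real lam) * of_int l *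
      (\<Sum>i<n. Poly_Mapping.single 0 (complex_of_real (v i)) * (monom (ee i) * mpoly_deriv i f))"
    unfolding sum_distrib_left
    by (intro sum.cong refl) (simp add: mult_single mult_ac)
  also have "\<dots> = Poly_Mapping.single 0 (complex_of_real lam) * of_int l * (Poly_Mapping.single 0 (complex_of_real d) * f)"
    unfolding euler[OF qh] ..
  finally have "sum T (Poly_Mapping.keys P) = Poly_Mapping.single 0 (- c) * f +
      Poly_Mapping.single 0 (complex_of_real lam) * of_int l * (Poly_Mapping.single 0 (complex_of_real d) * f)" .
  also have "\<dots> = 0"
  proof -
    have "Poly_Mapping.single 0 (complex_of_real lam) * of_int l * Poly_Mapping.single 0 (complex_of_real d)
        = (Poly_Mapping.single 0 c :: mpoly)"
      unfolding single_of_int[symmetric] mult_single c_def by (simp add: mult_ac)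
    then show ?thesis by (simp add: single_uminus mult_ac)
  qed
  finally have "sum T (Poly_Mapping.keys P) = 0" .
  then have "(\<Sum>(a,b)\<in>Poly_Mapping.keys P. Poly_Mapping.single 0 (Poly_Mapping.lookup P (a,b)) * monom a
            * fst (rat_derivs n f b (1, l)) * f ^ (1 - mindex_size b)) = 0"
    by (simp add: T_def)
  then show ?thesis
    using size P0_in unfolding ann_pow_def P_def c_def by blast
qed


theorem mainTheorem8:
  fixes n :: nat and f :: mpoly and v :: "nat \<Rightarrow> real" and d :: real
    and l :: int and lam :: real
  assumes f_in: "mpoly_in n f"
    and f_nz: "f \<noteq> 0"
    and v_nz: "\<exists>i<n. v i \<noteq> 0"
    and qh: "\<forall>\<gamma>\<in>Poly_Mapping.keys f. (\<Sum>i<n. v i * real (Poly_Mapping.lookup \<gamma> i)) = d"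
    and lam_nz: "lam \<noteq> 0"
    and proper: "initial_ideal n (\<lambda>i. lam * v i) (ann_pow n f l) \<noteq> weyl_alg n"
  shows "b_function n (ann_pow n f l) (\<lambda>i. lam * v i) = [: - complex_of_real (real_of_int l * lam * d), 1 :]"
proof -
  define \<omega> where "\<omega> = (\<lambda>i. lam * v i)"
  define c where "c = complex_of_real (real_of_int l * lam * d)"
  define I where "I = ann_pow n f l"
  define J where "J = initial_ideal n \<omega> I"
  define S where "S = euler_s n \<omega>"
  have Isub: "I \<subseteq> weyl_alg n" unfolding I_def ann_pow_def by blast
  note Jp = initial_ideal_props[OF Isub, where \<omega> = \<omega>, folded J_def]
  have P0I: "S - weyl_const c \<in> I" unfolding S_def I_def c_def \<omega>_def by (rule P0_ann[OF qh])
  obtain i where i: "i < n" "v i \<noteq> 0" using v_nz by blast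
  have "Poly_Mapping.lookup (S - weyl_const c) (ee i, ee i) = complex_of_real (lam * v i)"
    unfolding S_def lookup_minus lookup_euler_ee[OF i(1)] lookup_const using ee_nz by (simp add: \<omega>_def)
  then have P0nz: "S - weyl_const c \<noteq> 0" using i lam_nz by auto
  have "initial_form n \<omega> (S - weyl_const c) \<in> J" by (rule Jp(3)[OF P0I P0nz])
  then have D: "S - weyl_const c \<in> J" unfolding S_def using initial_P0 P0nz[unfolded S_def] by simp
  have Sin: "S \<in> weyl_alg n"
  proof -
    have "(S - weyl_const c) + weyl_const c \<in> weyl_alg n"
      by (rule weyl_alg_add[OF _ const_in]) (use D Jp(2) in blast)
    then show ?thesis by simp
  qed
  have Jne: "J \<noteq> weyl_alg n" using proper by (simp add: J_def I_def \<omega>_def)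
  have set: "{p. weyl_poly_eval p S \<in> J} = {p. [:-c, 1:] dvd p}"
    by (rule eval_set[OF Jp(1) Jp(2) Jne Sin D])
  have "b_function n I \<omega> = [:-c, 1:]"
    unfolding b_function_def S_def[symmetric] J_def[symmetric] set
  proof (rule the_equality)
    show "lead_coeff [:-c, 1:] = 1 \<and> {p. [:-c, 1:] dvd p} = {p. [:-c, 1:] dvd p}" by simp
  next
    fix b assume "lead_coeff b = 1 \<and> {p. [:-c, 1:] dvd p} = {p. b dvd p}"
    then show "b = [:-c, 1:]" using monic_unique by blast
  qed
  then show ?thesis by (simp add: I_def \<omega>_def c_def)
qed

end
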